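(* Let $N,d\in\mathbb N$, let $D$ be a set and $C\subseteq D$, and let $b_0,\ldots,b_N:D\to\mathbb R$ satisfy $b_k(\mathbf x)\ge0$ and $\sum_{k=0}^N b_k(\mathbf x)=1$ for all $\mathbf x\in C$. Let $\omega_0,\ldots,\omega_N>0$ and $\mathbf W_0,\ldots,\mathbf W_N\in\mathbb R^d$, and set $\mathbf S_N(\mathbf x):=\frac{\sum_{k=0}^N\omega_k\mathbf W_kb_k(\mathbf x)}{\sum_{k=0}^N\omega_kb_k(\mathbf x)}$ for $\mathbf x\in C$. Fix $\mathbf t,\mathbf u\in C$ with $b_k(\mathbf t)>0$ and $b_k(\mathbf u)>0$ for $1\le k\le N$. Define $h_0:=1$, $\mathbf Q_0:=\mathbf W_0$ and, for $k=1,\ldots,N$, $$h_k:=\left(1+\frac{\omega_{k-1}b_{k-1}(\mathbf t)}{h_{k-1}\,\omega_k b_k(\mathbf t)}\right)^{-1},\qquad \mathbf Q_k:=(1-h_k)\mathbf Q_{k-1}+h_k\mathbf W_k .$$ Assume $h_k\neq0$ for $1\le k\le N$, and suppose $$\frac{b_k(\mathbf t)}{b_{k+1}(\mathbf t)}\le\frac{b_k(\mathbf u)}{b_{k+1}(\mathbf u)}\qquad(0\le k\le N-1).$$ Then $\mathbf S_N(\mathbf u)\in\operatorname{conv}\{\mathbf Q_0,\mathbf Q_1,\ldots,\mathbf Q_N\}$.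
   Context: $\operatorname{conv}$ denotes the convex hull; $\mathbb E^d$ of the paper is identified with $\mathbb R^d$. *)

theory Defs
  imports "HOL-Analysis.Analysis"
begin

fun hseq :: "(nat \<Rightarrow> real) \<Rightarrow> (nat \<Rightarrow> 'a \<Rightarrow> real) \<Rightarrow> 'a \<Rightarrow> nat \<Rightarrow> real" where
  "hseq \<omega> b t 0 = 1"
| "hseq \<omega> b t (Suc k) =
     inverse (1 + (\<omega> k * b k t) / (hseq \<omega> b t k * \<omega> (Suc k) * b (Suc k) t))"

fun Qseq :: "(nat \<Rightarrow> real) \<Rightarrow> (nat \<Rightarrow> 'a \<Rightarrow> real) \<Rightarrow> (nat \<Rightarrow> 'v::real_vector) \<Rightarrow> 'a \<Rightarrow> nat \<Rightarrow> 'v" where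
  "Qseq \<omega> b W t 0 = W 0"
| "Qseq \<omega> b W t (Suc k) =
     (1 - hseq \<omega> b t (Suc k)) *\<^sub>R Qseq \<omega> b W t k + hseq \<omega> b t (Suc k) *\<^sub>R W (Suc k)"

definition SN :: "nat \<Rightarrow> (nat \<Rightarrow> real) \<Rightarrow> (nat \<Rightarrow> 'a \<Rightarrow> real) \<Rightarrow> (nat \<Rightarrow> 'v::real_vector) \<Rightarrow> 'a \<Rightarrow> 'v" where
  "SN N \<omega> b W x = inverse (\<Sum>k\<le>N. \<omega> k * b k x) *\<^sub>R (\<Sum>k\<le>N. (\<omega> k * b k x) *\<^sub>R W k)"

end

theory Submission
  imports Defs
begin

lemma telescope_gen:
  fixes r :: "nat \<Rightarrow> real" and E :: "nat \<Rightarrow> 'v::real_vector"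
  shows "(\<Sum>k=1..n. (r k - r (k+1)) *\<^sub>R E k)
        = (\<Sum>k=1..n. r k *\<^sub>R (E k - E (k-1))) + r 1 *\<^sub>R E 0 - r (n+1) *\<^sub>R E n"
proof (induction n)
  case 0
  then show ?case by simp
next
  case (Suc n)
  show ?case
    using Suc by (simp add: algebra_simps)
qed

lemma sum_split0:
  fixes f :: "nat \<Rightarrow> 'v::comm_monoid_add"
  shows "(\<Sum>k\<le>N. f k) = f 0 + (\<Sum>k=1..N. f k)"
  by (simp add: atMost_atLeast0 sum.atLeast_Suc_atMost)

lemma sum_split0':
  fixes f :: "nat \<Rightarrow> 'v::comm_monoid_add"
  shows "(\<Sum>k\<in>{0..N}. f k) = f 0 + (\<Sum>k=1..N. f k)"
  by (simp add: sum.atLeast_Suc_atMost)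

theorem theorem2:
  fixes N :: nat and D C :: "'a set"
    and b :: "nat \<Rightarrow> 'a \<Rightarrow> real" and \<omega> :: "nat \<Rightarrow> real"
    and W :: "nat \<Rightarrow> real ^ 'd" and t u :: 'a
  assumes "C \<subseteq> D"
    and bnn: "\<And>k x. k \<le> N \<Longrightarrow> x \<in> C \<Longrightarrow> b k x \<ge> 0"
    and "\<And>x. x \<in> C \<Longrightarrow> (\<Sum>k\<le>N. b k x) = 1"
    and wpos: "\<And>k. k \<le> N \<Longrightarrow> \<omega> k > 0"
    and tC: "t \<in> C" and uC: "u \<in> C"
    and bt: "\<And>k. 1 \<le> k \<Longrightarrow> k \<le> N \<Longrightarrow> b k t > 0"
    and bu: "\<And>k. 1 \<le> k \<Longrightarrow> k \<le> N \<Longrightarrow> b k u > 0"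
    and "\<And>k. 1 \<le> k \<Longrightarrow> k \<le> N \<Longrightarrow> hseq \<omega> b t k \<noteq> 0"
    and rat: "\<And>k. k + 1 \<le> N \<Longrightarrow> b k t / b (k + 1) t \<le> b k u / b (k + 1) u"
  shows "SN N \<omega> b W u \<in> convex hull (Qseq \<omega> b W t ` {0..N})"
proof -
  define c where "c k = \<omega> k * b k t" for k
  define d where "d k = \<omega> k * b k u" for k
  define A where "A k = (\<Sum>j\<le>k. c j)" for k
  define E where "E k = (\<Sum>j\<le>k. c j *\<^sub>R W j)" for k
  define r where "r k = (if 1 \<le> k \<and> k \<le> N then d k / c k else 0)" for k
  define \<nu> where "\<nu> k = (if k = 0 then d 0 - r 1 * c 0 else (r k - r (k+1)) * A k)" for k
  let ?h = "hseq \<omega> b t" and ?Q = "Qseq \<omega> b W t"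
  have c0: "k \<le> N \<Longrightarrow> c k \<ge> 0" for k
    using bnn[OF _ tC, of k] wpos[of k] by (simp add: c_def)
  have cp: "1 \<le> k \<Longrightarrow> k \<le> N \<Longrightarrow> c k > 0" for k
    using bt[of k] wpos[of k] by (simp add: c_def)
  have d0: "k \<le> N \<Longrightarrow> d k \<ge> 0" for k
    using bnn[OF _ uC, of k] wpos[of k] by (simp add: d_def)
  have dp: "1 \<le> k \<Longrightarrow> k \<le> N \<Longrightarrow> d k > 0" for k
    using bu[of k] wpos[of k] by (simp add: d_def)
  have A0: "k \<le> N \<Longrightarrow> A k \<ge> 0" for k
    unfolding A_def by (intro sum_nonneg) (auto intro: c0)
  have inv: "k \<le> N \<Longrightarrow> ?h k * A k = c k \<and> A k *\<^sub>R ?Q k = E k" for k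
  proof (induction k)
    case 0
    then show ?case by (simp add: A_def E_def)
  next
    case (Suc k)
    then have IH: "?h k * A k = c k" "A k *\<^sub>R ?Q k = E k" by auto
    have ck1: "c (Suc k) > 0" using cp[of "Suc k"] Suc.prems by auto
    have Ak: "A k \<ge> 0" using A0[of k] Suc.prems by auto
    have AS: "A (Suc k) = A k + c (Suc k)" by (simp add: A_def)
    have ES: "E (Suc k) = E k + c (Suc k) *\<^sub>R W (Suc k)" by (simp add: E_def)
    have frac: "\<omega> k * b k t / (?h k * \<omega> (Suc k) * b (Suc k) t) = A k / c (Suc k)"
    proof (cases "k = 0")
      case True
      then show ?thesis by (simp add: A_def c_def)
    next
      case False
      have hk: "?h k \<noteq> 0" using assms(9)[of k] False Suc.prems by auto
      have "A k = c k / ?h k" using IH(1) hk by (simp add: field_simps)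
      then show ?thesis by (simp add: c_def)
    qed
    have hS: "?h (Suc k) = c (Suc k) / A (Suc k)"
    proof -
      have "?h (Suc k) = inverse (1 + A k / c (Suc k))"
        by (subst hseq.simps(2), subst frac) (rule refl)
      also have "\<dots> = c (Suc k) / A (Suc k)"
        using ck1 Ak by (simp add: AS field_simps)
      finally show ?thesis .
    qed
    have AposS: "A (Suc k) > 0" using AS ck1 Ak by simp
    have "?h (Suc k) * A (Suc k) = c (Suc k)" using hS AposS by simp
    moreover have "A (Suc k) *\<^sub>R ?Q (Suc k) = E (Suc k)"
    proof -
      have "A (Suc k) *\<^sub>R ?Q (Suc k) =
          (A (Suc k) * (1 - ?h (Suc k))) *\<^sub>R ?Q k + (A (Suc k) * ?h (Suc k)) *\<^sub>R W (Suc k)"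
        by (simp add: scaleR_add_right)
      also have "A (Suc k) * (1 - ?h (Suc k)) = A k" using hS AposS AS by (simp add: field_simps)
      also have "A (Suc k) * ?h (Suc k) = c (Suc k)" using hS AposS by simp
      finally show ?thesis using IH(2) ES by simp
    qed
    ultimately show ?case by blast
  qed
  have invE: "k \<le> N \<Longrightarrow> E k = A k *\<^sub>R ?Q k" for k using inv[of k] by simp
  have rmono: "1 \<le> k \<Longrightarrow> k \<le> N \<Longrightarrow> r (k+1) \<le> r k" for k
  proof -
    assume k: "1 \<le> k" "k \<le> N"
    show ?thesis
    proof (cases "k + 1 \<le> N")
      case False
      then show ?thesis using k dp[of k] cp[of k] by (simp add: r_def)
    next
      case True
      have p: "b k t > 0" "b (k+1) t > 0" "b k u > 0" "b (k+1) u > 0" "\<omega> k > 0" "\<omega> (k+1) > 0"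
        using bt bu wpos k True by auto
      have "b k t * b (k+1) u \<le> b k u * b (k+1) t"
        using rat[OF True] p by (simp add: field_simps)
      then have "b (k+1) u / b (k+1) t \<le> b k u / b k t"
        using p by (simp add: field_simps)
      then show ?thesis using k True p by (simp add: r_def c_def d_def)
    qed
  qed
  have nu0: "\<nu> 0 \<ge> 0"
  proof (cases "1 \<le> N")
    case False
    then show ?thesis using d0[of 0] by (simp add: \<nu>_def r_def)
  next
    case True
    have p: "b 0 t \<ge> 0" "b 1 t > 0" "b 0 u \<ge> 0" "b 1 u > 0" "\<omega> 0 > 0" "\<omega> 1 > 0"
      using bt bu wpos bnn tC uC True by auto
    have "b 0 t * b 1 u \<le> b 0 u * b 1 t"
      using rat[of 0] True p by (simp add: field_simps)
    then have "\<omega> 0 * b 0 t * b 1 u \<le> \<omega> 0 * b 0 u * b 1 t"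
      using p by (simp add: mult.assoc mult_left_mono)
    then show ?thesis using True p by (simp add: \<nu>_def r_def c_def d_def field_simps)
  qed
  have nunn: "k \<in> {0..N} \<Longrightarrow> \<nu> k \<ge> 0" for k
    using nu0 rmono[of k] A0[of k] by (cases "k = 0") (auto simp: \<nu>_def)
  have rc: "1 \<le> k \<Longrightarrow> k \<le> N \<Longrightarrow> r k * c k = d k" for k
    using cp[of k] by (simp add: r_def)
  have Ediff: "1 \<le> k \<Longrightarrow> E k - E (k-1) = c k *\<^sub>R W k" for k
    by (cases k) (auto simp: E_def)
  have Adiff: "1 \<le> k \<Longrightarrow> A k - A (k-1) = c k" for k
    by (cases k) (auto simp: A_def)
  have rN: "r (N+1) = 0" by (simp add: r_def)
  have sumQ: "(\<Sum>k\<in>{0..N}. \<nu> k *\<^sub>R ?Q k) = (\<Sum>k\<le>N. d k *\<^sub>R W k)"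
  proof -
    have "(\<Sum>k\<in>{0..N}. \<nu> k *\<^sub>R ?Q k) = \<nu> 0 *\<^sub>R W 0 + (\<Sum>k=1..N. (r k - r (k+1)) *\<^sub>R E k)"
      unfolding sum_split0'
      by (auto intro!: sum.cong simp: \<nu>_def invE)
    also have "\<dots> = \<nu> 0 *\<^sub>R W 0 + ((\<Sum>k=1..N. r k *\<^sub>R (E k - E (k-1))) + r 1 *\<^sub>R E 0)"
      using telescope_gen[of r E N] rN by simp
    also have "(\<Sum>k=1..N. r k *\<^sub>R (E k - E (k-1))) = (\<Sum>k=1..N. d k *\<^sub>R W k)"
    proof (rule sum.cong)
      fix x assume x: "x \<in> {1..N}"
      then have "E x - E (x-1) = c x *\<^sub>R W x" "r x * c x = d x" using Ediff rc by auto
      then show "r x *\<^sub>R (E x - E (x-1)) = d x *\<^sub>R W x" by simp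
    qed simp
    finally show ?thesis
      by (simp add: sum_split0 \<nu>_def E_def algebra_simps)
  qed
  have sumnu: "(\<Sum>k\<in>{0..N}. \<nu> k) = (\<Sum>k\<le>N. d k)"
  proof -
    have "(\<Sum>k\<in>{0..N}. \<nu> k) = \<nu> 0 + (\<Sum>k=1..N. (r k - r (k+1)) *\<^sub>R A k)"
      unfolding sum_split0' by (auto intro!: sum.cong simp: \<nu>_def)
    also have "\<dots> = \<nu> 0 + ((\<Sum>k=1..N. r k *\<^sub>R (A k - A (k-1))) + r 1 *\<^sub>R A 0)"
      using telescope_gen[of r A N] rN by simp
    also have "(\<Sum>k=1..N. r k *\<^sub>R (A k - A (k-1))) = (\<Sum>k=1..N. d k)"
    proof (rule sum.cong)
      fix x assume x: "x \<in> {1..N}"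
      then have "A x - A (x-1) = c x" "r x * c x = d x" using Adiff rc by auto
      then show "r x *\<^sub>R (A x - A (x-1)) = d x" by simp
    qed simp
    finally show ?thesis
      by (simp add: sum_split0 \<nu>_def A_def algebra_simps)
  qed
  have Dpos: "(\<Sum>k\<le>N. d k) > 0"
  proof (cases "N = 0")
    case True
    then show ?thesis using assms(3)[OF uC] wpos[of 0] by (simp add: d_def)
  next
    case False
    have "d 1 \<le> (\<Sum>k\<le>N. d k)"
      using False d0 by (intro member_le_sum) auto
    then show ?thesis using dp[of 1] False by auto
  qed
  define Ds where "Ds = (\<Sum>k\<le>N. d k)"
  have "(\<Sum>k\<in>{0..N}. (\<nu> k / Ds) *\<^sub>R ?Q k) \<in> convex hull (?Q ` {0..N})"
  proof (rule convex_sum)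
    show "convex (convex hull (?Q ` {0..N}))" by (rule convex_convex_hull)
    show "\<And>i. i \<in> {0..N} \<Longrightarrow> 0 \<le> \<nu> i / Ds" using nunn Dpos by (simp add: Ds_def)
    show "(\<Sum>i\<in>{0..N}. \<nu> i / Ds) = 1"
      using sumnu Dpos by (simp add: Ds_def flip: sum_divide_distrib)
    show "\<And>i. i \<in> {0..N} \<Longrightarrow> ?Q i \<in> convex hull (?Q ` {0..N})"
      by (simp add: hull_inc)
  qed simp
  moreover have "(\<Sum>k\<in>{0..N}. (\<nu> k / Ds) *\<^sub>R ?Q k) = SN N \<omega> b W u"
  proof -
    have "(\<Sum>k\<in>{0..N}. (\<nu> k / Ds) *\<^sub>R ?Q k) = inverse Ds *\<^sub>R (\<Sum>k\<in>{0..N}. \<nu> k *\<^sub>R ?Q k)"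
      by (simp add: scaleR_sum_right divide_inverse_commute)
    then show ?thesis using sumQ by (simp add: SN_def Ds_def d_def)
  qed
  ultimately show ?thesis by simp
qed

end
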